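(* Let $\mathcal{M}=(S,A,\Delta,T,\rho)$ be a w\~pMDP with $T=\{t_0,\dots,t_n\}$ and $0=\rho(t_0)<\rho(t_1)<\dots<\rho(t_n)$, and let $\mathcal{N}$ be the \~pMDP obtained by adding fresh target states $\mathit{fin},\mathit{fail}$ (the only targets of $\mathcal{N}$), a fresh action $a\notin A$, and the transitions $(t_i,a,\mathit{fin})$ and $(t_i,a,t_{i-1})$ for $1\le i\le n$ and $(t_0,a,\mathit{fail})$. Then for every graph-preserving valuation $\mathsf{val}$ of $\mathcal{N}$ and every strategy $\sigma$ of $\mathcal{N}$, $0=\mathbb{P}^{t_0}[\Diamond \mathit{fin}]<\mathbb{P}^{t_1}[\Diamond \mathit{fin}]<\dots<\mathbb{P}^{t_n}[\Diamond \mathit{fin}]$, where probabilities are taken in the Markov chain induced by $\mathsf{val}$ and $\sigma$ on $\mathcal{N}$.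
   Context: A w\~pMDP $(S,A,\Delta,T,\rho)$ consists of finite states $S$, actions $A$, targets $T\subseteq S$ (without outgoing transitions), a set of transitions $\Delta\subseteq (S\setminus T)\times A\times S$ and weights $\rho:T\to\mathbb{Q}$; a \~pMDP is one with $T=\{\mathit{fin},\mathit{fail}\}$. A graph-preserving valuation assigns to each state-action pair $(s,a)$ with transitions in $\Delta$ a probability distribution with full support on $\{s':(s,a,s')\in\Delta\}$. A strategy maps each non-target state $s$ to an action $a$ available at $s$, i.e. such that $\Delta$ contains a transition $(s,a,s')$ (so in $\mathcal{N}$ the only action available at each $t_i$ is $a$); together with a valuation it induces a Markov chain, and $\mathbb{P}^s[\Diamond\mathit{fin}]$ is the probability of reaching $\mathit{fin}$ from $s$ in it. *)

theory Defs
  imports Complex_Main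
begin

text \<open>The weights rho are given separately (as a function on states, only its values on T matter).\<close>
definition wpMDP :: "'s set \<Rightarrow> 'a set \<Rightarrow> ('s \<times> 'a \<times> 's) set \<Rightarrow> 's set \<Rightarrow> bool" where
  "wpMDP S A D T \<longleftrightarrow> finite S \<and> finite A \<and> T \<subseteq> S \<and> D \<subseteq> (S - T) \<times> A \<times> S"

definition succs :: "('s \<times> 'a \<times> 's) set \<Rightarrow> 's \<Rightarrow> 'a \<Rightarrow> 's set" where
  "succs D s act = {s'. (s, act, s') \<in> D}"

definition graph_preserving :: "('s \<times> 'a \<times> 's) set \<Rightarrow> ('s \<Rightarrow> 'a \<Rightarrow> 's \<Rightarrow> real) \<Rightarrow> bool" where
  "graph_preserving D val \<longleftrightarrow>
     (\<forall>s act. succs D s act \<noteq> {} \<longrightarrow>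
        (\<forall>s'\<in>succs D s act. val s act s' > 0) \<and> (\<Sum>s'\<in>succs D s act. val s act s') = 1)"

text \<open>Memoryless deterministic strategy: picks an available action at every non-target state.\<close>
definition is_strategy :: "'s set \<Rightarrow> ('s \<times> 'a \<times> 's) set \<Rightarrow> 's set \<Rightarrow> ('s \<Rightarrow> 'a) \<Rightarrow> bool" where
  "is_strategy S D T \<sigma> \<longleftrightarrow> (\<forall>s\<in>S - T. succs D s (\<sigma> s) \<noteq> {})"

fun reach_within :: "('s \<times> 'a \<times> 's) set \<Rightarrow> 's set \<Rightarrow> ('s \<Rightarrow> 'a \<Rightarrow> 's \<Rightarrow> real) \<Rightarrow> ('s \<Rightarrow> 'a)
    \<Rightarrow> 's \<Rightarrow> nat \<Rightarrow> 's \<Rightarrow> real" where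
  "reach_within D T val \<sigma> g 0 s = (if s = g then 1 else 0)"
| "reach_within D T val \<sigma> g (Suc k) s =
     (if s = g then 1 else if s \<in> T then 0
      else (\<Sum>s'\<in>succs D s (\<sigma> s). val s (\<sigma> s) s' * reach_within D T val \<sigma> g k s'))"

definition reach_prob :: "('s \<times> 'a \<times> 's) set \<Rightarrow> 's set \<Rightarrow> ('s \<Rightarrow> 'a \<Rightarrow> 's \<Rightarrow> real) \<Rightarrow> ('s \<Rightarrow> 'a)
    \<Rightarrow> 's \<Rightarrow> 's \<Rightarrow> real" where
  "reach_prob D T val \<sigma> g s = (SUP k. reach_within D T val \<sigma> g k s)"

definition N_trans :: "('s \<times> 'a \<times> 's) set \<Rightarrow> (nat \<Rightarrow> 's) \<Rightarrow> nat \<Rightarrow> 'a \<Rightarrow> 's \<Rightarrow> 's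
    \<Rightarrow> ('s \<times> 'a \<times> 's) set" where
  "N_trans D t n a fin fail =
     D \<union> {(t i, a, fin) | i. 1 \<le> i \<and> i \<le> n} \<union> {(t i, a, t (i - 1)) | i. 1 \<le> i \<and> i \<le> n}
       \<union> {(t 0, a, fail)}"

end

theory Submission
  imports Defs
begin

fun Pf :: "(nat \<Rightarrow> real) \<Rightarrow> (nat \<Rightarrow> real) \<Rightarrow> nat \<Rightarrow> real" where
  "Pf v w 0 = 0"
| "Pf v w (Suc i) = v (Suc i) + w (Suc i) * Pf v w i"

theorem lemma1:
  fixes S :: "'s set" and A :: "'a set" and D :: "('s \<times> 'a \<times> 's) set"
    and t :: "nat \<Rightarrow> 's" and n :: nat and \<rho> :: "'s \<Rightarrow> rat"
    and fin fail :: 's and a :: 'a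
    and val :: "'s \<Rightarrow> 'a \<Rightarrow> 's \<Rightarrow> real" and \<sigma> :: "'s \<Rightarrow> 'a"
  assumes M: "wpMDP S A D (t ` {0..n})"
    and t_inj: "inj_on t {0..n}"
    and rho0: "\<rho> (t 0) = 0"
    and rho_mono: "\<forall>i<n. \<rho> (t i) < \<rho> (t (Suc i))"
    and fresh: "fin \<notin> S" "fail \<notin> S" "fin \<noteq> fail" "a \<notin> A"
    and val: "graph_preserving (N_trans D t n a fin fail) val"
    and strat: "is_strategy (S \<union> {fin, fail}) (N_trans D t n a fin fail) {fin, fail} \<sigma>"
  shows "reach_prob (N_trans D t n a fin fail) {fin, fail} val \<sigma> fin (t 0) = 0
       \<and> (\<forall>i<n. reach_prob (N_trans D t n a fin fail) {fin, fail} val \<sigma> fin (t i)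
              < reach_prob (N_trans D t n a fin fail) {fin, fail} val \<sigma> fin (t (Suc i)))"
proof -
  let ?N = "N_trans D t n a fin fail"
  let ?r = "reach_within ?N {fin, fail} val \<sigma> fin"
  have tS: "t i \<in> S" if "i \<le> n" for i using M that unfolding wpMDP_def by auto
  have tne: "t i \<noteq> fin" "t i \<noteq> fail" if "i \<le> n" for i using tS[OF that] fresh by auto
  have noD: "(t i, b, x) \<notin> D" if "i \<le> n" for i b x using M that unfolding wpMDP_def by auto
  have teq: "t i = t j \<longleftrightarrow> i = j" if "i \<le> n" "j \<le> n" for i j
    using t_inj that by (auto dest: inj_onD)
  have succ_other: "succs ?N (t i) b = {}" if "i \<le> n" "b \<noteq> a" for i b
    using that noD unfolding succs_def N_trans_def by auto
  have succ0: "succs ?N (t 0) a = {fail}"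
    using noD teq fresh tne unfolding succs_def N_trans_def by fastforce
  have succS: "succs ?N (t (Suc j)) a = {fin, t j}" if "Suc j \<le> n" for j
  proof -
    have "(t (Suc j), a, x) \<in> ?N \<longleftrightarrow> x = fin \<or> x = t j" for x
    proof
      assume "(t (Suc j), a, x) \<in> ?N"
      then show "x = fin \<or> x = t j"
        using noD[OF that] teq[OF that] that tne[of "Suc j"] unfolding N_trans_def
        by (auto simp: teq)
    next
      assume "x = fin \<or> x = t j"
      then show "(t (Suc j), a, x) \<in> ?N" using that unfolding N_trans_def
        by (auto intro!: exI[of _ "Suc j"])
    qed
    then show ?thesis unfolding succs_def by auto
  qed
  have sig: "\<sigma> (t i) = a" if "i \<le> n" for i
  proof (rule ccontr)
    assume "\<sigma> (t i) \<noteq> a"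
    then have "succs ?N (t i) (\<sigma> (t i)) = {}" using succ_other that by blast
    moreover have "t i \<in> (S \<union> {fin, fail}) - {fin, fail}" using tS[OF that] tne[OF that] by auto
    ultimately show False using strat unfolding is_strategy_def by blast
  qed
  define v where "v i = val (t i) a fin" for i
  define w where "w i = val (t i) a (t (i - 1))" for i
  have vw: "v (Suc j) > 0" "w (Suc j) > 0" "v (Suc j) + w (Suc j) = 1" if "Suc j \<le> n" for j
  proof -
    have ne: "succs ?N (t (Suc j)) a \<noteq> {}" using succS[OF that] by auto
    have fj: "fin \<noteq> t j" using tne[of j] that by auto
    have g: "(\<forall>s'\<in>{fin, t j}. val (t (Suc j)) a s' > 0) \<and> (\<Sum>s'\<in>{fin, t j}. val (t (Suc j)) a s') = 1"
    proof -
      have "(\<forall>s'\<in>succs ?N (t (Suc j)) a. val (t (Suc j)) a s' > 0) \<and> (\<Sum>s'\<in>succs ?N (t (Suc j)) a. val (t (Suc j)) a s') = 1"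
        using val ne unfolding graph_preserving_def by blast
      then show ?thesis unfolding succS[OF that] .
    qed
    show "v (Suc j) > 0" "w (Suc j) > 0" "v (Suc j) + w (Suc j) = 1"
      using g fj unfolding v_def w_def by auto
  qed
  have rfail: "?r k fail = 0" for k using fresh by (cases k) auto
  have rfin: "?r k fin = 1" for k by (cases k) auto
  have P01: "0 \<le> Pf v w i \<and> Pf v w i < 1" if "i \<le> n" for i
    using that
  proof (induction i)
    case 0 then show ?case by simp
  next
    case (Suc i)
    then have h: "0 \<le> Pf v w i" "Pf v w i < 1" by auto
    have a1: "w (Suc i) * Pf v w i < w (Suc i) * 1"
      using h vw[OF Suc.prems] by (intro mult_strict_left_mono) auto
    have a2: "0 \<le> w (Suc i) * Pf v w i" using h vw[OF Suc.prems] by simp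
    have a3: "v (Suc i) + w (Suc i) = 1" "0 < v (Suc i)" using vw[OF Suc.prems] by auto
    have "0 \<le> v (Suc i) + w (Suc i) * Pf v w i \<and> v (Suc i) + w (Suc i) * Pf v w i < 1"
      using a1 a2 a3 by linarith
    then show ?case by simp
  qed
  have main: "\<forall>i\<le>n. 0 \<le> ?r k (t i) \<and> ?r k (t i) \<le> Pf v w i \<and> (i \<le> k \<longrightarrow> ?r k (t i) = Pf v w i)" for k
  proof (induction k)
    case 0
    show ?case using tne P01 by auto
  next
    case (Suc k)
    show ?case
    proof (intro allI impI)
      fix i assume i: "i \<le> n"
      show "0 \<le> ?r (Suc k) (t i) \<and> ?r (Suc k) (t i) \<le> Pf v w i \<and> (i \<le> Suc k \<longrightarrow> ?r (Suc k) (t i) = Pf v w i)"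
      proof (cases i)
        case 0
        then show ?thesis using tne[OF i] sig[OF i] succ0 rfail by simp
      next
        case (Suc j)
        have j: "Suc j \<le> n" using i Suc by simp
        have fj: "fin \<noteq> t j" using tne[of j] j by auto
        have eq: "?r (Suc k) (t i) = v i + w i * ?r k (t j)"
          using tne[OF i] sig[OF i] succS[OF j] fj rfin unfolding Suc v_def w_def by simp
        have IH: "0 \<le> ?r k (t j)" "?r k (t j) \<le> Pf v w j" "j \<le> k \<longrightarrow> ?r k (t j) = Pf v w j"
          using Suc.IH j by auto
        have "w i * ?r k (t j) \<le> w i * Pf v w j"
          using IH vw[OF j] Suc by (intro mult_left_mono) auto
        then show ?thesis using eq IH vw[OF j] Suc by auto
      qed
    qed
  qed
  have rp: "reach_prob ?N {fin, fail} val \<sigma> fin (t i) = Pf v w i" if "i \<le> n" for i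
    unfolding reach_prob_def
  proof (rule cSup_eq_maximum)
    show "Pf v w i \<in> range (\<lambda>k. ?r k (t i))" using main[of i] that by (auto intro!: image_eqI[of _ _ i])
    fix x assume "x \<in> range (\<lambda>k. ?r k (t i))"
    then show "x \<le> Pf v w i" using main that by auto
  qed
  show ?thesis
  proof
    show "reach_prob ?N {fin, fail} val \<sigma> fin (t 0) = 0" using rp[of 0] by simp
    show "\<forall>i<n. reach_prob ?N {fin, fail} val \<sigma> fin (t i) < reach_prob ?N {fin, fail} val \<sigma> fin (t (Suc i))"
    proof (intro allI impI)
      fix i assume i: "i < n"
      have h: "0 \<le> Pf v w i" "Pf v w i < 1" using P01[of i] i by auto
      have vv: "v (Suc i) > 0" "v (Suc i) + w (Suc i) = 1" using vw[of i] i by auto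
      have "Pf v w i < Pf v w (Suc i)"
      proof -
        have "v (Suc i) * Pf v w i < v (Suc i) * 1" using h vv by (intro mult_strict_left_mono) auto
        moreover have "w (Suc i) * Pf v w i = Pf v w i - v (Suc i) * Pf v w i"
        proof -
          have e: "(v (Suc i) + w (Suc i)) * Pf v w i = Pf v w i" using vv(2) by simp
          then show ?thesis unfolding distrib_right by linarith
        qed
        ultimately show ?thesis by simp
      qed
      then show "reach_prob ?N {fin, fail} val \<sigma> fin (t i) < reach_prob ?N {fin, fail} val \<sigma> fin (t (Suc i))"
        using rp[of i] rp[of "Suc i"] i by simp
    qed
  qed
qed

end
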